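(* Assume the linear setting: $F\equiv 0$, $u_0=0$, $Q e_p=\gamma_p e_p$ with $\gamma_p=\lambda_p^{\frac12-2\overline{\alpha}}$ for all $p\in\mathbb{N}$, for some $\overline{\alpha}>0$, and the coarse integrator is the linear implicit Euler scheme ($\hat S_{\Delta T}=(I-\Delta T A)^{-1}$). Let $T\in(0,\infty)$ and $k\in\mathbb{N}_0$. (1) If $k+1<\overline{\alpha}$, there exists $C_{T,k,\overline{\alpha}}\in(0,\infty)$ such that for all coarse step sizes $\Delta T$ (with $\delta t=\Delta T/J$, $J\in\mathbb{N}$), $$\sup_{n\Delta T\le T}\Big(\mathbb{E}\big[|\epsilon_n^{(k)}|^2\big]\Big)^{1/2}\le C_{T,k,\overline{\alpha}}\,\Delta T^{k+1}.$$ (2) If $k+1\ge\overline{\alpha}$, then for every $\alpha\in(0,\overline{\alpha})$ there exists $C_{T,k,\alpha}\in(0,\infty)$ such that for all such $\Delta T$, $$\sup_{n\Delta T\le T}\Big(\mathbb{E}\big[|\epsilon_n^{(k)}|^2\big]\Big)^{1/2}\le C_{T,k,\alpha}\,\Delta T^{\alpha}.$$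
   Context: $H=L^2(0,1)$ with norm $|\cdot|$ and inner product $\langle\cdot,\cdot\rangle$. $A$ is the Dirichlet Laplacian on $(0,1)$: $D(A)=H^2(0,1)\cap H^1_0(0,1)$, $Au=u''$; $Ae_p=-\lambda_p e_p$ with $\lambda_p=(\pi p)^2$, $e_p(x)=\sqrt2\sin(p\pi x)$, $p\in\mathbb{N}$, an orthonormal basis of $H$. $(e^{tA})_{t\ge0}$ is the associated semigroup. $W^Q(t)=\sum_{p}\sqrt{\gamma_p}\beta_p(t)e_p$ where $(\beta_p)$ are independent standard real Brownian motions on a filtered probability space. One considers the SPDE $du=Au\,dt+F(u)\,dt+dW^Q$, $u(0)=u_0$ (here $F=0$, $u_0=0$). Time grids: $T=N\Delta T$, $\Delta T=J\delta t$ with $N,J\in\mathbb{N}$; $t_n=n\Delta T$, $t_{n,j}=t_n+j\delta t$. Coarse integrator: $\mathcal{G}_n(u)=\hat S_{\Delta T}u+\Delta T\hat S_{\Delta T}F(u)+\hat S_{\Delta T}(W^Q(t_{n+1})-W^Q(t_n))$. Fine integrator $\mathcal{F}_n(u)=v_{n,J}$ where $v_{n,0}=u$ and $v_{n,j+1}=e^{\delta tA}v_{n,j}+\delta t e^{\delta tA}F(v_{n,j})+e^{\delta tA}(W^Q(t_{n,j+1})-W^Q(t_{n,j}))$ (exponential Euler with step $\delta t$). Parareal algorithm: $u_0^{(k)}=u_0$ for all $k$; $u_{n+1}^{(0)}=\mathcal{G}_n(u_n^{(0)})$; $u_{n+1}^{(k+1)}=\mathcal{G}_n(u_n^{(k+1)})+\mathcal{F}_n(u_n^{(k)})-\mathcal{G}_n(u_n^{(k)})$.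 Reference solution: $u_0^{\rm ref}=u_0$, $u_{n+1}^{\rm ref}=\mathcal{F}_n(u_n^{\rm ref})$. Error: $\epsilon_n^{(k)}=u_n^{(k)}-u_n^{\rm ref}$. *)

theory Defs
  imports "HOL-Probability.Probability" "HOL-Library.Function_Algebras"
begin

text \<open>Elements of H = L2(0,1) are represented by their coordinates in the
orthonormal eigenbasis e_p (p = 1,2,...): u is represented by the map
p \<mapsto> <u, e_p>.  Coordinate 0 is unused (it stays 0 throughout).\<close>

definition lam :: "nat \<Rightarrow> real" where
  "lam p = (pi * real p)^2"

definition gam :: "real \<Rightarrow> nat \<Rightarrow> real" where
  "gam abar p = lam p powr (1/2 - 2 * abar)"

definition Hnorm2 :: "(nat \<Rightarrow> real) \<Rightarrow> ennreal" where
  "Hnorm2 u = (\<Sum>p. ennreal ((u (Suc p))^2))"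

definition indep_BMs :: "'a measure \<Rightarrow> (nat \<Rightarrow> real \<Rightarrow> 'a \<Rightarrow> real) \<Rightarrow> bool" where
  "indep_BMs M \<beta> \<longleftrightarrow>
     prob_space M \<and>
     (\<forall>p t. \<beta> p t \<in> borel_measurable M) \<and>
     (\<forall>p. \<forall>\<omega>\<in>space M. \<beta> p 0 \<omega> = 0 \<and> continuous_on {0..} (\<lambda>t. \<beta> p t \<omega>)) \<and>
     (\<forall>(m::nat) (t::nat \<Rightarrow> real). 0 \<le> t 0 \<longrightarrow> (\<forall>i<m. t i < t (Suc i)) \<longrightarrow>
        prob_space.indep_vars M (\<lambda>_. borel)
          (\<lambda>(p, i) \<omega>. \<beta> p (t (Suc i)) \<omega> - \<beta> p (t i) \<omega>) (UNIV \<times> {..<m}) \<and>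
        (\<forall>p. \<forall>i<m. distributed M lborel (\<lambda>\<omega>. \<beta> p (t (Suc i)) \<omega> - \<beta> p (t i) \<omega>)
                        (\<lambda>x. ennreal (normal_density 0 (sqrt (t (Suc i) - t i)) x))))"

text \<open>Coarse integrator (F = 0, linear implicit Euler, S = (I - DT A)^{-1}),
coordinatewise: G_n(u) = S u + S (W^Q(t_{n+1}) - W^Q(t_n)).\<close>
definition coarse_int :: "real \<Rightarrow> real \<Rightarrow> (nat \<Rightarrow> real \<Rightarrow> 'a \<Rightarrow> real) \<Rightarrow> 'a \<Rightarrow> nat \<Rightarrow> (nat \<Rightarrow> real) \<Rightarrow> (nat \<Rightarrow> real)" where
  "coarse_int abar DT \<beta> \<omega> n u = (\<lambda>p.
     u p / (1 + DT * lam p)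
     + sqrt (gam abar p) * (\<beta> p (real (Suc n) * DT) \<omega> - \<beta> p (real n * DT) \<omega>) / (1 + DT * lam p))"

fun fine_v :: "real \<Rightarrow> real \<Rightarrow> nat \<Rightarrow> (nat \<Rightarrow> real \<Rightarrow> 'a \<Rightarrow> real) \<Rightarrow> 'a \<Rightarrow> nat \<Rightarrow> (nat \<Rightarrow> real) \<Rightarrow> nat \<Rightarrow> (nat \<Rightarrow> real)" where
  "fine_v abar DT J \<beta> \<omega> n u 0 = u"
| "fine_v abar DT J \<beta> \<omega> n u (Suc j) = (\<lambda>p.
     exp (- (DT / real J) * lam p) * fine_v abar DT J \<beta> \<omega> n u j p
     + exp (- (DT / real J) * lam p) * sqrt (gam abar p) *
         (\<beta> p (real n * DT + real (Suc j) * (DT / real J)) \<omega>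
          - \<beta> p (real n * DT + real j * (DT / real J)) \<omega>))"

definition fine_int :: "real \<Rightarrow> real \<Rightarrow> nat \<Rightarrow> (nat \<Rightarrow> real \<Rightarrow> 'a \<Rightarrow> real) \<Rightarrow> 'a \<Rightarrow> nat \<Rightarrow> (nat \<Rightarrow> real) \<Rightarrow> (nat \<Rightarrow> real)" where
  "fine_int abar DT J \<beta> \<omega> n u = fine_v abar DT J \<beta> \<omega> n u J"

fun parareal :: "(nat \<Rightarrow> 'v \<Rightarrow> 'v) \<Rightarrow> (nat \<Rightarrow> 'v \<Rightarrow> 'v) \<Rightarrow> 'v \<Rightarrow> nat \<Rightarrow> nat \<Rightarrow> 'v::ab_group_add" where
  "parareal G F u0 k 0 = u0"
| "parareal G F u0 0 (Suc n) = G n (parareal G F u0 0 n)"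
| "parareal G F u0 (Suc k) (Suc n) =
     G n (parareal G F u0 (Suc k) n) + F n (parareal G F u0 k n) - G n (parareal G F u0 k n)"

fun ref_sol :: "(nat \<Rightarrow> 'v \<Rightarrow> 'v) \<Rightarrow> 'v \<Rightarrow> nat \<Rightarrow> 'v" where
  "ref_sol F u0 0 = u0"
| "ref_sol F u0 (Suc n) = F n (ref_sol F u0 n)"

definition err :: "real \<Rightarrow> real \<Rightarrow> nat \<Rightarrow> (nat \<Rightarrow> real \<Rightarrow> 'a \<Rightarrow> real) \<Rightarrow> nat \<Rightarrow> nat \<Rightarrow> 'a \<Rightarrow> (nat \<Rightarrow> real)" where
  "err abar DT J \<beta> k n \<omega> =
     parareal (coarse_int abar DT \<beta> \<omega>) (fine_int abar DT J \<beta> \<omega>) (\<lambda>_. 0) k n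
     - ref_sol (fine_int abar DT J \<beta> \<omega>) (\<lambda>_. 0) n"

definition mean_sq_err :: "'a measure \<Rightarrow> real \<Rightarrow> real \<Rightarrow> nat \<Rightarrow> (nat \<Rightarrow> real \<Rightarrow> 'a \<Rightarrow> real) \<Rightarrow> nat \<Rightarrow> nat \<Rightarrow> ennreal" where
  "mean_sq_err M abar DT J \<beta> k n = (\<integral>\<^sup>+ \<omega>. Hnorm2 (err abar DT J \<beta> k n \<omega>) \<partial>M)"

end

theory Submission
  imports Defs
begin

lemma geo_le: fixes q :: real assumes "0 \<le> q" "q < 1" shows "(\<Sum>l<n. q^l) \<le> 1/(1-q)"
proof -
  have "(\<Sum>l<n. q^l) = (1 - q^n)/(1-q)" using assms one_diff_power_eq[of q n] by (simp add: field_simps)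
  also have "\<dots> \<le> 1/(1-q)" using assms by (intro divide_right_mono) auto
  finally show ?thesis .
qed

lemma lin_geo: fixes s :: real assumes "0 \<le> s" "s < 1" shows "real (Suc l) * s^l \<le> 1/(1-s)"
proof -
  have "real (Suc l) * s^l = (\<Sum>i<Suc l. s^l)" by simp
  also have "\<dots> \<le> (\<Sum>i<Suc l. s^i)" using assms by (intro sum_mono power_decreasing) auto
  also have "\<dots> \<le> 1/(1-s)" by (rule geo_le[OF assms])
  finally show ?thesis .
qed

lemma pow_diff_le: fixes r e :: real assumes "0 \<le> e" "e \<le> r"
  shows "r^(Suc l) - e^(Suc l) \<le> real (Suc l) * r^l * (r - e)"
proof (induction l)
  case 0 then show ?case by simp
next
  case (Suc l)
  have "r^(Suc (Suc l)) - e^(Suc (Suc l)) = r * (r^(Suc l) - e^(Suc l)) + e^(Suc l) * (r - e)"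
    by (simp add: algebra_simps)
  also have "\<dots> \<le> r * (real (Suc l) * r^l * (r - e)) + r^(Suc l) * (r - e)"
    using Suc assms by (intro add_mono mult_left_mono mult_right_mono power_mono) auto
  also have "\<dots> = real (Suc (Suc l)) * r^(Suc l) * (r - e)" by (simp add: algebra_simps)
  finally show ?case .
qed

lemma sq_diff_le: fixes a b :: real assumes "0 \<le> a" "0 \<le> b" shows "(a - b)^2 \<le> a^2 + b^2"
  using assms by (simp add: power2_eq_square algebra_simps)

lemma basic_exp:
  fixes x :: real assumes "0 < x"
  shows "exp (-x) \<le> 1/(1+x)" "1 - x \<le> exp (-x)" "1/(1+x) - exp (-x) \<le> x^2" "0 < exp (-x)"
proof -
  have "1 + x \<le> exp x" by (rule exp_ge_add_one_self)
  then show 1: "exp (-x) \<le> 1/(1+x)" using assms by (simp add: exp_minus field_simps)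
  show 2: "1 - x \<le> exp (-x)" using exp_ge_add_one_self[of "-x"] by simp
  have "1/(1+x) \<le> 1 - x + x^2" using assms by (simp add: field_simps power2_eq_square)
  then show "1/(1+x) - exp (-x) \<le> x^2" using 2 by linarith
  show "0 < exp (-x)" by simp
qed

lemma pow_sq_swap: "((a::real)^m)^2 = (a^2)^m"
  by (simp add: power_mult[symmetric] mult.commute)

lemma D0_sum_bound:
  fixes x :: real and J n :: nat
  assumes x: "0 < x" and J: "1 \<le> J"
  defines "r \<equiv> 1/(1+x)" and "e \<equiv> exp (-x)" and "E \<equiv> exp (-x/real J)"
  shows "(\<Sum>l<n. \<Sum>q<J. (r^(Suc l) - e^l * E^(Suc q))^2) \<le> 40 * real J * min x (1/x)"
proof -
  have r0: "0 < r" and r1: "r < 1" using x by (auto simp: r_def)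
  have e0: "0 < e" and er: "e \<le> r" using basic_exp[OF x] by (auto simp: e_def r_def)
  have e1x: "1 - x \<le> e" using basic_exp[OF x] by (simp add: e_def)
  have rex: "r - e \<le> x^2" using basic_exp[OF x] by (simp add: e_def r_def)
  have E0: "0 < E" and E1: "E < 1" using x J by (auto simp: E_def)
  have EJ: "E^J = e" unfolding E_def e_def using J by (simp add: exp_of_nat_mult[symmetric])
  have Eq: "e \<le> E^(Suc q)" if "q < J" for q
  proof -
    have "E^J \<le> E^(Suc q)" using that E0 E1 by (intro power_decreasing) auto
    then show ?thesis using EJ by simp
  qed
  have Eq1: "E^(Suc q) \<le> 1" for q using E0 E1 by (intro power_le_one) auto
  show ?thesis
  proof (cases "1 \<le> x")
    case True
    have "1/x \<le> 1" using True by simp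
    hence mn: "min x (1/x) = 1/x" using True by (intro min_absorb2) linarith
    have trm: "(r^(Suc l) - e^l * E^(Suc q))^2 \<le> (r^2)^(Suc l) + (e^2)^l * (E^2)^(Suc q)" for l q
    proof -
      have "(r^(Suc l) - e^l * E^(Suc q))^2 \<le> (r^(Suc l))^2 + (e^l * E^(Suc q))^2"
        using r0 e0 E0 by (intro sq_diff_le) auto
      then show ?thesis by (simp add: pow_sq_swap power_mult_distrib)
    qed
    have "(\<Sum>l<n. \<Sum>q<J. (r^(Suc l) - e^l * E^(Suc q))^2)
        \<le> (\<Sum>l<n. \<Sum>q<J. (r^2)^(Suc l) + (e^2)^l * (E^2)^(Suc q))"
      by (intro sum_mono trm)
    also have "\<dots> = real J * (r^2 * (\<Sum>l<n. (r^2)^l)) + (\<Sum>l<n. (e^2)^l) * (E^2 * (\<Sum>q<J. (E^2)^q))"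
      by (simp add: sum.distrib sum_distrib_left sum_distrib_right mult_ac sum.swap[of _ "{..<J}"])
    also have "\<dots> \<le> real J * (r^2 * 2) + 2 * (J / (2*x))"
    proof (intro add_mono mult_left_mono mult_mono)
      have rh: "r \<le> 1/2" using True by (simp add: r_def field_simps)
      have "r^2 \<le> (1/2)^2" using rh r0 by (intro power_mono) auto
      hence "r^2 \<le> 1/4" by (simp add: power_divide)
      show "(\<Sum>l<n. (r^2)^l) \<le> 2"
        proof -
        have "r^2 < 1" using \<open>r^2 \<le> 1/4\<close> by linarith
        have "1/(1-r^2) \<le> 2" using \<open>r^2 \<le> 1/4\<close> \<open>r^2 < 1\<close> by (simp add: divide_le_eq)
        then show ?thesis using geo_le[of "r^2" n] \<open>r^2 < 1\<close> by simp
      qed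
      have "e^2 \<le> (1/2)^2" using rh er e0 by (intro power_mono) auto
      hence "e^2 \<le> 1/4" by (simp add: power_divide)
      show "(\<Sum>l<n. (e^2)^l) \<le> 2"
        proof -
        have "e^2 < 1" using \<open>e^2 \<le> 1/4\<close> by linarith
        have "1/(1-e^2) \<le> 2" using \<open>e^2 \<le> 1/4\<close> \<open>e^2 < 1\<close> by (simp add: divide_le_eq)
        then show ?thesis using geo_le[of "e^2" n] \<open>e^2 < 1\<close> by simp
      qed
      have E2: "E^2 * exp (2*x/J) = 1" unfolding E_def
        by (simp add: power2_eq_square exp_add[symmetric])
      have "1 + 2*x/J \<le> exp (2*x/J)" by (rule exp_ge_add_one_self)
      hence E2b: "E^2 * (1 + 2*x/J) \<le> 1" using E2 E0
        by (metis mult_left_mono zero_le_power2)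
      have E21: "E^2 < 1" using E0 E1 by (simp add: power_less_one_iff)
      have "E^2 * (\<Sum>q<J. (E^2)^q) \<le> E^2 * (1/(1-E^2))"
        using geo_le[of "E^2" J] E21 by (intro mult_left_mono) auto
      also have "\<dots> \<le> J/(2*x)" using E2b E21 x J
        by (simp add: field_simps)
      finally show "E^2 * (\<Sum>q<J. (E^2)^q) \<le> J/(2*x)" .
    qed (auto simp: sum_nonneg)
    also have "\<dots> \<le> 40 * real J * min x (1/x)"
    proof -
      have "r \<le> 1/x" using x by (simp add: r_def field_simps)
      moreover have "r \<le> 1/2" using True by (simp add: r_def field_simps)
      ultimately have "r*(r*2) \<le> r * 1" using r0 by (intro mult_left_mono) auto
      hence "r^2 * 2 \<le> 1/x" using \<open>r \<le> 1/x\<close> by (simp add: power2_eq_square mult.assoc)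
      then have "real J * (r^2 * 2) \<le> real J * (1/x)" by (intro mult_left_mono) auto
      moreover have "2 * (J / (2*x)) = real J * (1/x)" using x by simp
      ultimately show ?thesis unfolding mn using x J by (simp add: field_simps)
    qed
    finally show ?thesis .
  next
    case False
    have "1 \<le> 1/x" using False x by simp
    hence mn: "min x (1/x) = x" using False by (intro min_absorb1) linarith
    define \<rho> where "\<rho> = sqrt r"
    have \<rho>0: "0 \<le> \<rho>" and \<rho>1: "\<rho> < 1" and \<rho>r: "\<rho>^2 = r" using r0 r1 by (auto simp: \<rho>_def)
    have omr: "x/2 \<le> 1 - r" using x False by (simp add: r_def field_simps)
    have omrho: "x/4 \<le> 1 - \<rho>"
    proof -
      have "1 - r = (1-\<rho>)*(1+\<rho>)" using \<rho>r by (simp add: algebra_simps power2_eq_square)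
      also have "\<dots> \<le> (1-\<rho>)*2" using \<rho>1 \<rho>0 r1 \<rho>r by (intro mult_left_mono) (auto simp: \<rho>_def)
      finally show ?thesis using omr by simp
    qed
    have trm: "(r^(Suc l) - e^l * E^(Suc q))^2 \<le> (1/(1-\<rho>))^2 * x^4 * r^l + x^2 * (e^2)^l"
      if "q < J" for l q
    proof -
      define a where "a = r^(Suc l) - e^(Suc l)"
      define b where "b = e^l * (E^(Suc q) - e)"
      have ent: "r^(Suc l) - e^l * E^(Suc q) = a - b" by (simp add: a_def b_def algebra_simps)
      have "e^(Suc l) \<le> r^(Suc l)" using e0 er by (intro power_mono) auto
      hence a0: "0 \<le> a" unfolding a_def by simp
      have b0: "0 \<le> b" unfolding b_def using e0 Eq[OF that] by simp
      have "a \<le> real (Suc l) * r^l * (r - e)" unfolding a_def using pow_diff_le[of e r l] e0 er by simp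
      also have "\<dots> \<le> real (Suc l) * r^l * x^2" using rex r0 by (intro mult_left_mono) auto
      also have "\<dots> = (real (Suc l) * \<rho>^l) * \<rho>^l * x^2" using \<rho>r by (simp add: power_mult_distrib[symmetric] pow_sq_swap[symmetric] power2_eq_square)
      also have "\<dots> \<le> (1/(1-\<rho>)) * \<rho>^l * x^2"
        using lin_geo[OF \<rho>0 \<rho>1, of l] \<rho>0 by (intro mult_right_mono) auto
      finally have aa: "a \<le> (1/(1-\<rho>)) * \<rho>^l * x^2" .
      have "a^2 \<le> ((1/(1-\<rho>)) * \<rho>^l * x^2)^2" using aa a0 by (intro power_mono) auto
      also have "\<dots> = (1/(1-\<rho>))^2 * (\<rho>^l)^2 * (x^2)^2" by (simp only: power_mult_distrib)
      also have "\<dots> = (1/(1-\<rho>))^2 * x^4 * r^l"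
      proof -
        have "(\<rho>^l)^2 = r^l" using \<rho>r by (simp add: pow_sq_swap)
        moreover have "(x^2)^2 = x^4" by (simp flip: power_mult)
        ultimately show ?thesis by simp
      qed
      finally have a2: "a^2 \<le> (1/(1-\<rho>))^2 * x^4 * r^l" .
      have "b \<le> e^l * x" unfolding b_def using Eq1[of q] e1x e0 by (intro mult_left_mono) auto
      hence "b^2 \<le> (e^l * x)^2" using b0 by (intro power_mono) auto
      hence b2: "b^2 \<le> x^2 * (e^2)^l" by (simp add: power_mult_distrib pow_sq_swap mult.commute)
      show ?thesis unfolding ent using sq_diff_le[OF a0 b0] a2 b2 by linarith
    qed
    have "(\<Sum>l<n. \<Sum>q<J. (r^(Suc l) - e^l * E^(Suc q))^2)
        \<le> (\<Sum>l<n. \<Sum>q<J. (1/(1-\<rho>))^2 * x^4 * r^l + x^2 * (e^2)^l)"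
      by (intro sum_mono trm) auto
    also have "\<dots> = real J * ((1/(1-\<rho>))^2 * x^4 * (\<Sum>l<n. r^l) + x^2 * (\<Sum>l<n. (e^2)^l))"
      by (simp add: sum.distrib sum_distrib_left sum_distrib_right mult_ac distrib_left)
    also have "\<dots> \<le> real J * ((1/(1-\<rho>))^2 * x^4 * (1/(1-r)) + x^2 * (1/(1-e^2)))"
      using geo_le[of r n] geo_le[of "e^2" n] r0 r1 e0 er
      by (intro mult_left_mono add_mono) (auto simp: power_less_one_iff)
    also have "\<dots> \<le> real J * ((16/x^2) * x^4 * (2/x) + x^2 * (2/x))"
    proof (intro mult_left_mono add_mono mult_mono)
      show "(1/(1-\<rho>))^2 \<le> 16/x^2"
      proof -
        have "1/(1-\<rho>) \<le> 4/x" using omrho x \<rho>1 by (simp add: field_simps)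
        hence "(1/(1-\<rho>))^2 \<le> (4/x)^2" using \<rho>1 by (intro power_mono) auto
        thus ?thesis by (simp add: power_divide)
      qed
      show "1/(1-r) \<le> 2/x" using omr x r1 by (simp add: field_simps)
      have "e * e \<le> e * 1" using e0 er r1 by (intro mult_left_mono) auto
      hence "e^2 \<le> r" using er by (simp add: power2_eq_square)
      then show "1/(1-e^2) \<le> 2/x" using omr x r1 by (simp add: field_simps)
    qed (use x \<rho>1 r1 in auto)
    also have "\<dots> = 34 * real J * x" using x by (simp add: field_simps power2_eq_square power4_eq_xxxx)
    also have "\<dots> \<le> 40 * real J * min x (1/x)" unfolding mn using x by simp
    finally show ?thesis .
  qed
qed

definition Gc :: "real \<Rightarrow> nat \<Rightarrow> (nat \<Rightarrow> nat \<Rightarrow> real) \<Rightarrow> (nat \<Rightarrow> nat \<Rightarrow> real)" where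
  "Gc r m c = (\<lambda>a b. r * c a b + (if a = m then r else 0))"

definition Fc :: "real \<Rightarrow> real \<Rightarrow> nat \<Rightarrow> nat \<Rightarrow> (nat \<Rightarrow> nat \<Rightarrow> real) \<Rightarrow> (nat \<Rightarrow> nat \<Rightarrow> real)" where
  "Fc e E J m c = (\<lambda>a b. e * c a b + (if a = m then E^(J-b) else 0))"

lemma Gc_apply: "Gc r m c a b = r * c a b + (if a = m then r else 0)" by (simp add: Gc_def)
lemma Fc_apply: "Fc e E J m c a b = e * c a b + (if a = m then E^(J-b) else 0)" by (simp add: Fc_def)

definition Dc :: "real \<Rightarrow> real \<Rightarrow> real \<Rightarrow> nat \<Rightarrow> nat \<Rightarrow> nat \<Rightarrow> (nat \<Rightarrow> nat \<Rightarrow> real)" where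
  "Dc r e E J k n = parareal (Gc r) (Fc e E J) 0 k n - ref_sol (Fc e E J) 0 n"

lemma Dc_zero: "Dc r e E J k 0 = 0"
  unfolding Dc_def by (cases k) auto

lemma Dc_rec: "Dc r e E J (Suc k) (Suc n) a b = r * Dc r e E J (Suc k) n a b + (e - r) * Dc r e E J k n a b"
  unfolding Dc_def by (simp add: Gc_apply Fc_apply algebra_simps)

lemma P0_closed: "parareal (Gc r) (Fc e E J) 0 0 n a b = (if a < n then r^(n-a) else 0)"
proof (induction n)
  case 0 then show ?case by simp
next
  case (Suc n)
  have "parareal (Gc r) (Fc e E J) 0 0 (Suc n) a b = r * parareal (Gc r) (Fc e E J) 0 0 n a b + (if a = n then r else 0)"
    by (simp only: parareal.simps Gc_apply)
  also have "\<dots> = r * (if a < n then r^(n-a) else 0) + (if a = n then r else 0)" by (simp only: Suc)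
  also have "\<dots> = (if a < Suc n then r^(Suc n-a) else 0)"
    by (auto simp: Suc_diff_le less_Suc_eq)
  finally show ?case .
qed

lemma R_closed: "ref_sol (Fc e E J) 0 n a b = (if a < n then e^(n-1-a) * E^(J-b) else 0)"
proof (induction n)
  case 0 then show ?case by simp
next
  case (Suc n)
  have st: "ref_sol (Fc e E J) 0 (Suc n) a b = e * ref_sol (Fc e E J) 0 n a b + (if a = n then E^(J-b) else 0)"
    by (simp only: ref_sol.simps Fc_apply)
  show ?case
  proof (cases "a < n")
    case True
    then have "Suc (n-1-a) = n - a" by simp
    then have "e * e^(n-1-a) = e^(n-a)" by (metis power_Suc)
    with True show ?thesis unfolding st Suc by (simp add: mult.assoc[symmetric])
  next
    case False then show ?thesis unfolding st Suc by (auto simp: less_Suc_eq)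
  qed
qed

lemma Dc0_closed: "Dc r e E J 0 n a b = (if a < n then r^(n-a) - e^(n-1-a) * E^(J-b) else 0)"
  unfolding Dc_def by (simp add: P0_closed R_closed)

definition NN :: "nat \<Rightarrow> nat \<Rightarrow> (nat \<Rightarrow> nat \<Rightarrow> real) \<Rightarrow> real" where
  "NN K J c = sqrt (\<Sum>a<K. \<Sum>b<J. (c a b)^2)"

lemma NN_L2: "NN K J c = L2_set (\<lambda>ab. c (fst ab) (snd ab)) ({..<K} \<times> {..<J})"
  unfolding NN_def L2_set_def by (simp add: sum.cartesian_product case_prod_beta)

lemma L2_set_scale: "L2_set (\<lambda>i. u * f i) A = \<bar>u\<bar> * L2_set f A"
  unfolding L2_set_def by (simp add: power_mult_distrib sum_distrib_left[symmetric] real_sqrt_mult)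

lemma NN_tri: "NN K J (\<lambda>a b. u * c a b + v * d a b) \<le> \<bar>u\<bar> * NN K J c + \<bar>v\<bar> * NN K J d"
proof -
  have "NN K J (\<lambda>a b. u * c a b + v * d a b)
      \<le> L2_set (\<lambda>ab. u * c (fst ab) (snd ab)) ({..<K} \<times> {..<J}) + L2_set (\<lambda>ab. v * d (fst ab) (snd ab)) ({..<K} \<times> {..<J})"
    unfolding NN_L2 by (rule L2_set_triangle_ineq)
  then show ?thesis unfolding NN_L2 L2_set_scale .
qed

lemma NN_nonneg: "0 \<le> NN K J c" unfolding NN_def by (simp add: sum_nonneg)

lemma NN_zero: "NN K J 0 = 0" unfolding NN_def by simp

lemma Dc0_sum:
  fixes x :: real and J :: nat
  assumes x: "0 < x" and J: "1 \<le> J"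
  defines "r \<equiv> 1/(1+x)" and "e \<equiv> exp (-x)" and "E \<equiv> exp (-x/real J)"
  shows "(\<Sum>a<K. \<Sum>b<J. (Dc r e E J 0 n a b)^2) \<le> 40 * real J * min x (1/x)"
proof -
  define h where "h a = (\<Sum>b<J. (Dc r e E J 0 n a b)^2)" for a
  have h0: "0 \<le> h a" for a unfolding h_def by (simp add: sum_nonneg)
  have "(\<Sum>a<K. h a) \<le> (\<Sum>a<max K n. h a)" using h0 by (intro sum_mono2) auto
  also have "\<dots> = (\<Sum>a<n. h a)"
    by (rule sum.mono_neutral_right) (auto simp: h_def Dc0_closed)
  also have "\<dots> = (\<Sum>a<n. (\<lambda>l. \<Sum>q<J. (r^(Suc l) - e^l * E^(Suc q))^2) (n - Suc a))"
  proof (intro sum.cong refl)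
    fix a assume "a \<in> {..<n}"
    then have an: "a < n" by simp
    have "h a = (\<Sum>b<J. (r^(Suc (n - Suc a)) - e^(n - Suc a) * E^(J-b))^2)"
      unfolding h_def Dc0_closed using an by (simp add: Suc_diff_Suc)
    also have "\<dots> = (\<Sum>b<J. (\<lambda>q. (r^(Suc (n - Suc a)) - e^(n - Suc a) * E^(Suc q))^2) (J - Suc b))"
      by (intro sum.cong refl) (auto simp: Suc_diff_Suc)
    also have "\<dots> = (\<Sum>q<J. (r^(Suc (n - Suc a)) - e^(n - Suc a) * E^(Suc q))^2)"
      by (rule sum.nat_diff_reindex)
    finally show "h a = (\<lambda>l. \<Sum>q<J. (r^(Suc l) - e^l * E^(Suc q))^2) (n - Suc a)" by simp
  qed
  also have "\<dots> = (\<Sum>l<n. \<Sum>q<J. (r^(Suc l) - e^l * E^(Suc q))^2)"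
    by (rule sum.nat_diff_reindex)
  also have "\<dots> \<le> 40 * real J * min x (1/x)"
    unfolding r_def e_def E_def by (rule D0_sum_bound[OF x J])
  finally show ?thesis unfolding h_def .
qed

lemma Dc_bound:
  fixes x :: real and J :: nat
  assumes x: "0 < x" and J: "1 \<le> J"
  defines "r \<equiv> 1/(1+x)" and "e \<equiv> exp (-x)" and "E \<equiv> exp (-x/real J)"
  defines "mn \<equiv> min x (1/x)"
  shows "NN K J (Dc r e E J k n) \<le> (2*mn)^k * sqrt (40 * real J * mn)"
proof (induction k arbitrary: n)
  case 0
  show ?case using Dc0_sum[OF x J, of n K] unfolding NN_def r_def e_def E_def mn_def by simp
next
  case (Suc k)
  have mn0: "0 \<le> mn" using x by (simp add: mn_def)
  have r0: "0 < r" and r1: "r < 1" using x by (auto simp: r_def)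
  have er: "exp (-x) \<le> 1/(1+x)" "1/(1+x) - exp (-x) \<le> x^2" using basic_exp[OF x] by auto
  have key: "r - e \<le> 2 * mn * (1 - r)"
  proof (cases "1 \<le> x")
    case True
    have "1/x \<le> 1" using True by simp
    hence mn: "mn = 1/x" unfolding mn_def using True by (intro min_absorb2) linarith
    have "r - e \<le> r" using basic_exp[OF x] by (simp add: e_def)
    also have "r \<le> 2 * (1/x) * (1 - r)"
    proof -
      have "1 - r = x/(1+x)" using x by (simp add: r_def field_simps)
      hence "2 * (1/x) * (1 - r) = 2 * r" using x by (simp add: r_def)
      then show ?thesis using r0 by simp
    qed
    finally show ?thesis unfolding mn .
  next
    case False
    have "1 \<le> 1/x" using False x by simp
    hence mn: "mn = x" unfolding mn_def using False by (intro min_absorb1) linarith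
    have "r - e \<le> x^2" using er by (simp add: r_def e_def)
    also have "x^2 \<le> 2 * x * (1 - r)" using x False by (simp add: r_def field_simps power2_eq_square)
    finally show ?thesis unfolding mn .
  qed
  define B where "B k = (2*mn)^k * sqrt (40 * real J * mn)" for k
  have B0: "0 \<le> B k" for k using mn0 by (simp add: B_def)
  have er': "e \<le> r" using er by (simp add: r_def e_def)
  have IHk: "NN K J (Dc r e E J k m) \<le> B k" for m using Suc.IH unfolding B_def by simp
  show ?case
  proof (induction n)
    case 0
    have "NN K J (Dc r e E J (Suc k) 0) = 0" by (simp add: Dc_zero NN_def)
    then show ?case using B0[of "Suc k"] unfolding B_def by simp
  next
    case (Suc n)
    have eq: "Dc r e E J (Suc k) (Suc n) = (\<lambda>a b. r * Dc r e E J (Suc k) n a b + (e - r) * Dc r e E J k n a b)"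
      by (intro ext) (rule Dc_rec)
    have "NN K J (Dc r e E J (Suc k) (Suc n)) \<le> \<bar>r\<bar> * NN K J (Dc r e E J (Suc k) n) + \<bar>e - r\<bar> * NN K J (Dc r e E J k n)"
      unfolding eq by (rule NN_tri)
    also have "\<dots> \<le> r * B (Suc k) + (r - e) * B k"
    proof (rule add_mono)
      show "\<bar>r\<bar> * NN K J (Dc r e E J (Suc k) n) \<le> r * B (Suc k)"
        using mult_left_mono[OF Suc.IH, of r] r0 by (simp add: B_def)
      show "\<bar>e - r\<bar> * NN K J (Dc r e E J k n) \<le> (r - e) * B k"
        using mult_left_mono[OF IHk[of n], of "r - e"] er' by simp
    qed
    also have "\<dots> \<le> r * B (Suc k) + (2 * mn * (1 - r)) * B k" using key B0 by (intro add_left_mono mult_right_mono) auto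
    also have "\<dots> = B (Suc k)" by (simp add: B_def algebra_simps)
    finally show ?case by (simp add: B_def)
  qed
qed

lemma parareal_coord:
  assumes G: "\<And>m u. G m u p = g m (u p)" and F: "\<And>m u. F m u p = f m (u p)"
  shows "parareal G F u0 k n p = parareal g f (u0 p) k n"
proof (induction k arbitrary: n)
  case 0 show ?case by (induction n) (simp_all add: G)
next
  case (Suc k) show ?case by (induction n) (simp_all add: G F Suc.IH)
qed

lemma ref_coord:
  assumes F: "\<And>m u. F m u p = f m (u p)"
  shows "ref_sol F u0 n p = ref_sol f (u0 p) n"
  by (induction n) (simp_all add: F)

lemma parareal_lin:
  assumes G: "\<And>m c. m < K \<Longrightarrow> g m (L c) = L (G m c)"
    and F: "\<And>m c. m < K \<Longrightarrow> f m (L c) = L (F m c)"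
    and L: "\<And>a b c. L (a + b - c) = L a + L b - L c"
  shows "n \<le> K \<Longrightarrow> parareal g f (L c0) k n = L (parareal G F c0 k n)"
proof (induction k arbitrary: n)
  case 0 then show ?case by (induction n) (simp_all add: G)
next
  case (Suc k) then show ?case by (induction n) (simp_all add: G F L)
qed

lemma ref_lin:
  assumes F: "\<And>m c. m < K \<Longrightarrow> f m (L c) = L (F m c)"
  shows "n \<le> K \<Longrightarrow> ref_sol f (L c0) n = L (ref_sol F c0 n)"
  by (induction n) (simp_all add: F)

definition Lin :: "real \<Rightarrow> nat \<Rightarrow> nat \<Rightarrow> (nat \<Rightarrow> nat \<Rightarrow> real) \<Rightarrow> (nat \<Rightarrow> nat \<Rightarrow> real) \<Rightarrow> real" where
  "Lin s K J w c = s * (\<Sum>a<K. \<Sum>b<J. c a b * w a b)"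

lemma Lin_add: "Lin s K J w (a + b - c) = Lin s K J w a + Lin s K J w b - Lin s K J w c"
  unfolding Lin_def by (simp add: algebra_simps sum.distrib sum_subtractf)

lemma Lin_zero: "Lin s K J w 0 = 0" unfolding Lin_def by simp

lemma Lin_diff: "Lin s K J w (a - b) = Lin s K J w a - Lin s K J w b"
  unfolding Lin_def by (simp add: algebra_simps sum_subtractf)

definition wi :: "real \<Rightarrow> nat \<Rightarrow> (nat \<Rightarrow> real \<Rightarrow> 'a \<Rightarrow> real) \<Rightarrow> nat \<Rightarrow> 'a \<Rightarrow> nat \<Rightarrow> nat \<Rightarrow> real" where
  "wi DT J \<beta> p \<omega> a b = \<beta> p (real a * DT + real (Suc b) * (DT / real J)) \<omega> - \<beta> p (real a * DT + real b * (DT / real J)) \<omega>"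

lemma fine_v_expand:
  "fine_v abar DT J \<beta> \<omega> n u j p = exp (- (DT / real J) * lam p)^j * u p
     + sqrt (gam abar p) * (\<Sum>i<j. exp (- (DT / real J) * lam p)^(j-i) * wi DT J \<beta> p \<omega> n i)"
proof (induction j)
  case 0 then show ?case by simp
next
  case (Suc j)
  define E where "E = exp (- (DT / real J) * lam p)"
  define s where "s = sqrt (gam abar p)"
  define S where "S j = (\<Sum>i<j. E^(j-i) * wi DT J \<beta> p \<omega> n i)" for j
  have sumS: "S (Suc j) = E * S j + E * wi DT J \<beta> p \<omega> n j"
    unfolding S_def by (simp add: sum_distrib_left Suc_diff_le mult.assoc)
  have step: "fine_v abar DT J \<beta> \<omega> n u (Suc j) p = E * fine_v abar DT J \<beta> \<omega> n u j p + E * s * wi DT J \<beta> p \<omega> n j"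
    by (simp add: wi_def E_def s_def)
  have IH: "fine_v abar DT J \<beta> \<omega> n u j p = E^j * u p + s * S j"
    using Suc unfolding E_def s_def S_def .
  have "fine_v abar DT J \<beta> \<omega> n u (Suc j) p = E^(Suc j) * u p + s * S (Suc j)"
    unfolding step IH sumS by (simp add: algebra_simps)
  then show ?case unfolding E_def s_def S_def .
qed

lemma sum_delta_block: fixes K J m :: nat shows "(\<Sum>a<K. \<Sum>b<J. (if a = m then f b else (0::real))) = (if m < K then (\<Sum>b<J. f b) else 0)"
proof -
  have "(\<Sum>a<K. \<Sum>b<J. (if a = m then f b else (0::real))) = (\<Sum>a<K. (if a = m then (\<Sum>b<J. f b) else 0))"
    by (intro sum.cong) auto
  also have "\<dots> = (if m < K then (\<Sum>b<J. f b) else 0)" by simp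
  finally show ?thesis .
qed

lemma coarse_tele:
  assumes "1 \<le> J"
  shows "\<beta> p (real (Suc n) * DT) \<omega> - \<beta> p (real n * DT) \<omega> = (\<Sum>b<J. wi DT J \<beta> p \<omega> n b)"
proof -
  have "(\<Sum>b<J. wi DT J \<beta> p \<omega> n b) = (\<Sum>b<J. (\<lambda>b. \<beta> p (real n * DT + real b * (DT / real J)) \<omega>) (Suc b) - (\<lambda>b. \<beta> p (real n * DT + real b * (DT / real J)) \<omega>) b)"
    unfolding wi_def by simp
  also have "\<dots> = \<beta> p (real n * DT + real J * (DT / real J)) \<omega> - \<beta> p (real n * DT) \<omega>"
    by (subst sum_lessThan_telescope) simp
  also have "real n * DT + real J * (DT / real J) = real (Suc n) * DT" using assms by (simp add: algebra_simps)
  finally show ?thesis by simp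
qed

lemma err_repr:
  fixes abar DT :: real and J k n p :: nat
  assumes DT: "0 < DT" and J: "1 \<le> J" and p: "0 < p"
  defines "x \<equiv> DT * lam p"
  shows "err abar DT J \<beta> k n \<omega> p =
     Lin (sqrt (gam abar p)) n J (wi DT J \<beta> p \<omega>) (Dc (1/(1+x)) (exp (-x)) (exp (-x/real J)) J k n)"
proof -
  define s where "s = sqrt (gam abar p)"
  define r where "r = 1/(1+x)"
  define e where "e = exp (-x)"
  define E where "E = exp (-x/real J)"
  define w where "w = wi DT J \<beta> p \<omega>"
  define g where "g = (\<lambda>m y. coarse_int abar DT \<beta> \<omega> m (\<lambda>_. y) p)"
  define f where "f = (\<lambda>m y. fine_int abar DT J \<beta> \<omega> m (\<lambda>_. y) p)"
  have EE: "exp (- (DT / real J) * lam p) = E" unfolding E_def x_def by (simp add: field_simps)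
  have EJ: "E^J = e" unfolding E_def e_def using J by (simp add: exp_of_nat_mult[symmetric])
  have fexp: "fine_int abar DT J \<beta> \<omega> m u p = e * u p + s * (\<Sum>i<J. E^(J-i) * w m i)" for m u
    unfolding fine_int_def fine_v_expand EE EJ s_def w_def by simp
  have cexp: "coarse_int abar DT \<beta> \<omega> m u p = r * u p + r * s * (\<Sum>b<J. w m b)" for m u
    unfolding coarse_int_def coarse_tele[OF J] r_def x_def s_def w_def by (simp add: field_simps)
  have G1: "coarse_int abar DT \<beta> \<omega> m u p = g m (u p)" for m u unfolding g_def cexp by simp
  have F1: "fine_int abar DT J \<beta> \<omega> m u p = f m (u p)" for m u unfolding f_def fexp by simp
  define L where "L = Lin s n J w"
  have Gl: "g m (L c) = L (Gc r m c)" if "m < n" for m c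
  proof -
    have pt: "Gc r m c a b * w a b = r * (c a b * w a b) + (if a = m then r * w m b else 0)" for a b
      unfolding Gc_apply by (simp add: algebra_simps)
    have "L (Gc r m c) = s * ((\<Sum>a<n. \<Sum>b<J. r * (c a b * w a b)) + (\<Sum>a<n. \<Sum>b<J. (if a = m then r * w m b else 0)))"
      unfolding L_def Lin_def pt by (simp add: sum.distrib)
    also have "\<dots> = r * L c + r * s * (\<Sum>b<J. w m b)"
      unfolding sum_delta_block using that by (simp add: L_def Lin_def sum_distrib_left algebra_simps)
    finally show ?thesis unfolding g_def cexp by simp
  qed
  have Fl: "f m (L c) = L (Fc e E J m c)" if "m < n" for m c
  proof -
    have pt: "Fc e E J m c a b * w a b = e * (c a b * w a b) + (if a = m then E^(J-b) * w m b else 0)" for a b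
      unfolding Fc_apply by (simp add: algebra_simps)
    have "L (Fc e E J m c) = s * ((\<Sum>a<n. \<Sum>b<J. e * (c a b * w a b)) + (\<Sum>a<n. \<Sum>b<J. (if a = m then E^(J-b) * w m b else 0)))"
      unfolding L_def Lin_def pt by (simp add: sum.distrib)
    also have "\<dots> = e * L c + s * (\<Sum>b<J. E^(J-b) * w m b)"
      unfolding sum_delta_block using that by (simp add: L_def Lin_def sum_distrib_left algebra_simps)
    finally show ?thesis unfolding f_def fexp by simp
  qed
  have L0: "L 0 = 0" unfolding L_def by (rule Lin_zero)
  have "err abar DT J \<beta> k n \<omega> p = parareal g f 0 k n - ref_sol f 0 n"
    unfolding err_def using parareal_coord[of "coarse_int abar DT \<beta> \<omega>" p g "fine_int abar DT J \<beta> \<omega>" f]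
      ref_coord[of "fine_int abar DT J \<beta> \<omega>" p f] G1 F1 by simp
  also have "\<dots> = L (parareal (Gc r) (Fc e E J) 0 k n) - L (ref_sol (Fc e E J) 0 n)"
    using parareal_lin[of n g L "Gc r" f "Fc e E J" n 0 k, OF Gl Fl] ref_lin[of n f L "Fc e E J" n 0, OF Fl]
      L0 Lin_add[of s n J w] by (simp add: L_def)
  also have "\<dots> = L (Dc r e E J k n)" unfolding Dc_def L_def by (simp add: Lin_diff)
  finally show ?thesis unfolding L_def s_def w_def r_def e_def E_def .
qed

lemma gauss_facts:
  fixes X :: "'a \<Rightarrow> real"
  assumes P: "prob_space M" and D: "distributed M lborel X (\<lambda>x. ennreal (normal_density 0 \<sigma> x))" and s: "0 < \<sigma>"
  shows "integrable M X" "integrable M (\<lambda>\<omega>. X \<omega> * X \<omega>)" "(\<integral>\<omega>. X \<omega> \<partial>M) = 0" "(\<integral>\<omega>. X \<omega> * X \<omega> \<partial>M) = \<sigma>^2"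
proof -
  have h1: "has_bochner_integral lborel (\<lambda>x. normal_density 0 \<sigma> x * x) 0"
    using normal_moment_nz_1[OF s, of 0] .
  show "integrable M X"
    by (rule distributed_integrable_var[OF D]) (auto intro: integrable.intros[OF h1])
  show "(\<integral>\<omega>. X \<omega> \<partial>M) = 0"
    using prob_space.normal_distributed_expectation[OF P s D] by simp
  have h2: "has_bochner_integral lborel (\<lambda>x. normal_density 0 \<sigma> x * (x * x)) (\<sigma>^2)"
  proof -
    have "has_bochner_integral lborel (\<lambda>x. normal_density 0 \<sigma> x * (x - 0) ^ (2 * 1)) (fact (2 * 1) / ((2 / \<sigma>\<^sup>2)^1 * fact 1))"
      by (rule normal_moment_even[OF s])
    moreover have "fact (2 * 1) / ((2 / \<sigma>\<^sup>2)^1 * fact 1) = (\<sigma>^2::real)" using s by simp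
    ultimately show ?thesis by (simp add: power2_eq_square)
  qed
  show "integrable M (\<lambda>\<omega>. X \<omega> * X \<omega>)"
    using distributed_integrable[OF D, of "\<lambda>x. x * x"] integrable.intros[OF h2] by auto
  show "(\<integral>\<omega>. X \<omega> * X \<omega> \<partial>M) = \<sigma>^2"
    using distributed_integral[OF D, of "\<lambda>x. x * x"] h2 by (auto dest: has_bochner_integral_integral_eq)
qed

lemma second_moment:
  fixes Z :: "'i \<Rightarrow> 'a \<Rightarrow> real"
  assumes A: "finite A"
    and int: "\<And>a b. a \<in> A \<Longrightarrow> b \<in> A \<Longrightarrow> integrable M (\<lambda>\<omega>. Z a \<omega> * Z b \<omega>)"
    and orth: "\<And>a b. a \<in> A \<Longrightarrow> b \<in> A \<Longrightarrow> a \<noteq> b \<Longrightarrow> (\<integral>\<omega>. Z a \<omega> * Z b \<omega> \<partial>M) = 0"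
    and var: "\<And>a. a \<in> A \<Longrightarrow> (\<integral>\<omega>. Z a \<omega> * Z a \<omega> \<partial>M) = v"
  shows "integrable M (\<lambda>\<omega>. (\<Sum>a\<in>A. d a * Z a \<omega>)^2)"
    "(\<integral>\<omega>. (\<Sum>a\<in>A. d a * Z a \<omega>)^2 \<partial>M) = v * (\<Sum>a\<in>A. (d a)^2)"
proof -
  have eq: "(\<lambda>\<omega>. (\<Sum>a\<in>A. d a * Z a \<omega>)^2) = (\<lambda>\<omega>. \<Sum>a\<in>A. \<Sum>b\<in>A. (d a * d b) * (Z a \<omega> * Z b \<omega>))"
    by (simp add: power2_eq_square sum_product mult_ac)
  show "integrable M (\<lambda>\<omega>. (\<Sum>a\<in>A. d a * Z a \<omega>)^2)"
    unfolding eq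
  proof (rule Bochner_Integration.integrable_sum, rule Bochner_Integration.integrable_sum)
    fix a b assume "a \<in> A" "b \<in> A"
    then show "integrable M (\<lambda>\<omega>. d a * d b * (Z a \<omega> * Z b \<omega>))" using int by auto
  qed
  have "(\<integral>\<omega>. (\<Sum>a\<in>A. d a * Z a \<omega>)^2 \<partial>M) = (\<Sum>a\<in>A. \<Sum>b\<in>A. (d a * d b) * (\<integral>\<omega>. Z a \<omega> * Z b \<omega> \<partial>M))"
    unfolding eq using int by (simp add: integrable_mult_right)
  also have "\<dots> = (\<Sum>a\<in>A. \<Sum>b\<in>A. (if b = a then (d a)^2 * v else 0))"
    by (intro sum.cong refl) (auto simp: orth var power2_eq_square)
  also have "\<dots> = (\<Sum>a\<in>A. (d a)^2 * v)" using A by simp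
  finally show "(\<integral>\<omega>. (\<Sum>a\<in>A. d a * Z a \<omega>)^2 \<partial>M) = v * (\<Sum>a\<in>A. (d a)^2)"
    by (simp add: sum_distrib_left mult_ac)
qed

lemma idx_lt: fixes a b K J :: nat assumes "a < K" "b < J" shows "a * J + b < K * J"
proof -
  have "a * J + b < a * J + J" using assms by simp
  also have "\<dots> = Suc a * J" by simp
  also have "\<dots> \<le> K * J" using assms by (intro mult_le_mono1) simp
  finally show ?thesis .
qed

lemma idx_inj: fixes a b a' b' J :: nat assumes "b < J" "b' < J" "a * J + b = a' * J + b'" shows "a = a' \<and> b = b'"
proof -
  have "a = (a * J + b) div J" using assms(1) by simp
  also have "\<dots> = (a' * J + b') div J" using assms(3) by simp
  also have "\<dots> = a'" using assms(2) by simp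
  finally have 1: "a = a'" .
  have "b = (a * J + b) mod J" using assms(1) by simp
  also have "\<dots> = (a' * J + b') mod J" using assms(3) by simp
  also have "\<dots> = b'" using assms(2) by simp
  finally show ?thesis using 1 by simp
qed

lemma mode_mse:
  fixes \<beta> :: "nat \<Rightarrow> real \<Rightarrow> 'a \<Rightarrow> real" and J K p :: nat
  assumes BM: "indep_BMs M \<beta>" and DT: "0 < DT" and J: "1 \<le> J"
  shows "(\<integral>\<^sup>+\<omega>. ennreal ((Lin s K J (wi DT J \<beta> p \<omega>) c)^2) \<partial>M) = ennreal (s^2 * (DT/real J) * (\<Sum>a<K. \<Sum>b<J. (c a b)^2))"
proof -
  have P: "prob_space M" using BM unfolding indep_BMs_def by blast
  interpret prob_space M by (rule P)
  define dt where "dt = DT / real J"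
  have dt0: "0 < dt" using DT J by (simp add: dt_def)
  have Jdt: "real J * dt = DT" using J by (simp add: dt_def)
  define t where "t i = real i * dt" for i :: nat
  define X where "X = (\<lambda>(p, i) \<omega>. \<beta> p (t (Suc i)) \<omega> - \<beta> p (t i) \<omega>)"
  have H: "\<forall>(m::nat) (t::nat \<Rightarrow> real). 0 \<le> t 0 \<longrightarrow> (\<forall>i<m. t i < t (Suc i)) \<longrightarrow>
        indep_vars (\<lambda>_. borel) (\<lambda>(p, i) \<omega>. \<beta> p (t (Suc i)) \<omega> - \<beta> p (t i) \<omega>) (UNIV \<times> {..<m}) \<and>
        (\<forall>p. \<forall>i<m. distributed M lborel (\<lambda>\<omega>. \<beta> p (t (Suc i)) \<omega> - \<beta> p (t i) \<omega>)
                        (\<lambda>x. ennreal (normal_density 0 (sqrt (t (Suc i) - t i)) x)))"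
    using BM unfolding indep_BMs_def by blast
  have g1: "0 \<le> t 0" by (simp add: t_def)
  have g2: "\<forall>i<K*J. t i < t (Suc i)" using dt0 by (simp add: t_def distrib_right)
  have HH: "indep_vars (\<lambda>_. borel) X (UNIV \<times> {..<K*J}) \<and>
        (\<forall>p. \<forall>i<K*J. distributed M lborel (\<lambda>\<omega>. \<beta> p (t (Suc i)) \<omega> - \<beta> p (t i) \<omega>)
                        (\<lambda>x. ennreal (normal_density 0 (sqrt (t (Suc i) - t i)) x)))"
    using spec[OF spec[OF H, of "K*J"], of t] g1 g2 unfolding X_def by blast
  have ind: "indep_vars (\<lambda>_. borel) X (UNIV \<times> {..<K*J})" using HH by blast
  have Xeq: "X (p, i) = (\<lambda>\<omega>. \<beta> p (t (Suc i)) \<omega> - \<beta> p (t i) \<omega>)" for p i by (simp add: X_def)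
  have tsd: "t (Suc i) - t i = dt" for i by (simp add: t_def distrib_right)
  have dist: "distributed M lborel (X (p, i)) (\<lambda>x. ennreal (normal_density 0 (sqrt dt) x))" if "i < K*J" for i
    using HH that unfolding Xeq tsd by blast
  define A where "A = {..<K} \<times> {..<J}"
  define idx where "idx ab = fst ab * J + snd ab" for ab :: "nat \<times> nat"
  define Y where "Y ab = X (p, idx ab)" for ab
  have idxA: "idx ab < K * J" if "ab \<in> A" for ab using that idx_lt by (auto simp: A_def idx_def)
  have idx_inj': "ab = ab'" if "ab \<in> A" "ab' \<in> A" "idx ab = idx ab'" for ab ab'
    using that idx_inj[of "snd ab" J "snd ab'" "fst ab" "fst ab'"] by (auto simp: A_def idx_def prod_eq_iff)
  have wY: "wi DT J \<beta> p \<omega> a b = Y (a, b) \<omega>" for a b \<omega>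
  proof -
    have "t (a * J + b) = real a * DT + real b * (DT / real J)"
      unfolding t_def using Jdt by (simp add: dt_def[symmetric] algebra_simps)
    moreover have "t (Suc (a * J + b)) = real a * DT + real (Suc b) * (DT / real J)"
      unfolding t_def using Jdt by (simp add: dt_def[symmetric] algebra_simps)
    ultimately show ?thesis unfolding wi_def Y_def idx_def Xeq by simp
  qed
  have sdt: "0 < sqrt dt" using dt0 by simp
  have GF: "integrable M (Y ab) \<and> integrable M (\<lambda>\<omega>. Y ab \<omega> * Y ab \<omega>) \<and> (\<integral>\<omega>. Y ab \<omega> \<partial>M) = 0 \<and> (\<integral>\<omega>. Y ab \<omega> * Y ab \<omega> \<partial>M) = dt"
    if "ab \<in> A" for ab
    using gauss_facts[OF P dist[OF idxA[OF that]] sdt] dt0 unfolding Y_def by simp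
  have indep2: "indep_var borel (Y ab) borel (Y ab')" if "ab \<in> A" "ab' \<in> A" "ab \<noteq> ab'" for ab ab'
  proof -
    have ne: "idx ab \<noteq> idx ab'" using idx_inj' that by blast
    have sub: "insert (p, idx ab) {(p, idx ab')} \<subseteq> UNIV \<times> {..<K*J}" using idxA that by auto
    have "indep_var borel (X (p, idx ab)) borel (\<lambda>\<omega>. \<Sum>j\<in>{(p, idx ab')}. X j \<omega>)"
      by (rule indep_vars_sum) (use ne indep_vars_subset[OF ind sub] in auto)
    then show ?thesis unfolding Y_def by simp
  qed
  have int2: "integrable M (\<lambda>\<omega>. Y ab \<omega> * Y ab' \<omega>)" if "ab \<in> A" "ab' \<in> A" for ab ab'
  proof (cases "ab = ab'")
    case True then show ?thesis using GF that by simp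
  next
    case False then show ?thesis using indep_var_integrable[OF indep2[OF that False]] GF that by blast
  qed
  have orth: "(\<integral>\<omega>. Y ab \<omega> * Y ab' \<omega> \<partial>M) = 0" if "ab \<in> A" "ab' \<in> A" "ab \<noteq> ab'" for ab ab'
    using indep_var_lebesgue_integral[OF indep2[OF that]] GF that by simp
  have var: "(\<integral>\<omega>. Y ab \<omega> * Y ab \<omega> \<partial>M) = dt" if "ab \<in> A" for ab using GF that by simp
  define d where "d ab = s * c (fst ab) (snd ab)" for ab
  have finA: "finite A" by (simp add: A_def)
  note SM = second_moment[of A M Y dt d, OF finA int2 orth var]
  have Lrep: "Lin s K J (wi DT J \<beta> p \<omega>) c = (\<Sum>ab\<in>A. d ab * Y ab \<omega>)" for \<omega>
    unfolding Lin_def wY A_def d_def by (simp add: sum.cartesian_product sum_distrib_left case_prod_beta mult_ac)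
  have "(\<integral>\<^sup>+\<omega>. ennreal ((Lin s K J (wi DT J \<beta> p \<omega>) c)^2) \<partial>M) = (\<integral>\<^sup>+\<omega>. ennreal ((\<Sum>ab\<in>A. d ab * Y ab \<omega>)^2) \<partial>M)"
    unfolding Lrep ..
  also have "\<dots> = ennreal (\<integral>\<omega>. (\<Sum>ab\<in>A. d ab * Y ab \<omega>)^2 \<partial>M)"
    by (rule nn_integral_eq_integral) (use SM(1) in auto)
  also have "\<dots> = ennreal (dt * (\<Sum>ab\<in>A. (d ab)^2))" using SM(2) by simp
  also have "dt * (\<Sum>ab\<in>A. (d ab)^2) = s^2 * (DT/real J) * (\<Sum>a<K. \<Sum>b<J. (c a b)^2)"
    unfolding A_def d_def dt_def
    by (simp add: sum.cartesian_product case_prod_beta sum_distrib_left power_mult_distrib mult_ac)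
  finally show ?thesis .
qed

lemma min_pow_le:
  fixes x s :: real and k :: nat
  assumes x: "0 < x" and s1: "-(2*real k+1) \<le> s" and s2: "s \<le> 2*real k+1"
  shows "(min x (1/x))^(2*k+1) \<le> x powr s"
proof (cases "x \<le> 1")
  case True
  have "x * x \<le> 1 * 1" using True x by (intro mult_mono) auto
  then have "x \<le> 1/x" using x by (simp add: field_simps)
  hence mn: "min x (1/x) = x" by (rule min_absorb1)
  have "x^(2*k+1) = x powr real (2*k+1)" by (rule powr_realpow[OF x, symmetric])
  also have "\<dots> \<le> x powr s" using s2 x True by (intro powr_mono') auto
  finally show ?thesis unfolding mn .
next
  case False
  have "1/x \<le> 1" using False x by simp
  then have "1/x \<le> x" using False by linarith
  hence mn: "min x (1/x) = 1/x" by (rule min_absorb2)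
  have "x powr (- real (2*k+1)) = inverse (x^(2*k+1))" by (simp only: powr_minus powr_realpow[OF x])
  then have "(1/x)^(2*k+1) = x powr (- real (2*k+1))" by (simp add: power_one_over inverse_eq_divide)
  also have "\<dots> \<le> x powr s" using s1 False by (intro powr_mono) auto
  finally show ?thesis unfolding mn .
qed

lemma lam_pos: "0 < p \<Longrightarrow> 0 < lam p" unfolding lam_def by simp

lemma lam_powr: assumes "0 < p" shows "lam p powr q = pi powr (2*q) * real p powr (2*q)"
proof -
  have y: "0 < pi * real p" using assms by simp
  have e1: "(pi * real p) powr 2 = (pi * real p)^2" using y by simp
  have "lam p powr q = ((pi * real p) powr 2) powr q" unfolding lam_def e1 ..
  also have "\<dots> = (pi * real p) powr (2*q)" by (rule powr_powr)
  also have "\<dots> = pi powr (2*q) * real p powr (2*q)" by (rule powr_mult)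
  finally show ?thesis .
qed

lemma mode_bound:
  fixes DT abar s :: real and J k n p :: nat
  assumes DT: "0 < DT" and J: "1 \<le> J" and p: "0 < p"
    and s1: "-(2*real k+1) \<le> s" and s2: "s \<le> 2*real k+1"
  defines "x \<equiv> DT * lam p"
  shows "gam abar p * (DT / real J) * (\<Sum>a<n. \<Sum>b<J. (Dc (1/(1+x)) (exp (-x)) (exp (-x/real J)) J k n a b)^2)
     \<le> 40 * 4^k * DT powr (1+s) * lam p powr (1/2 - 2*abar + s)"
proof -
  have lp: "0 < lam p" by (rule lam_pos[OF p])
  have x: "0 < x" using DT lp by (simp add: x_def)
  define mn where "mn = min x (1/x)"
  have mn0: "0 \<le> mn" using x by (simp add: mn_def)
  define S where "S = (\<Sum>a<n. \<Sum>b<J. (Dc (1/(1+x)) (exp (-x)) (exp (-x/real J)) J k n a b)^2)"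
  have S0: "0 \<le> S" unfolding S_def by (simp add: sum_nonneg)
  have "sqrt S \<le> (2*mn)^k * sqrt (40 * real J * mn)"
    using Dc_bound[OF x J, of n k n] unfolding NN_def S_def mn_def .
  then have "(sqrt S)^2 \<le> ((2*mn)^k * sqrt (40 * real J * mn))^2" using S0 by (intro power_mono) auto
  also have "\<dots> = 4^k * mn^(2*k) * (40 * real J * mn)"
  proof -
    have f4: "(2::real)^(2*k) = 4^k" by (simp add: power_mult)
    show ?thesis using mn0 J by (simp add: power_mult_distrib power_mult[symmetric] mult.commute[of k 2] f4)
  qed
  finally have Sb: "S \<le> 4^k * mn^(2*k) * (40 * real J * mn)" using S0 by simp
  have g0: "0 \<le> gam abar p" unfolding gam_def by simp
  have "gam abar p * (DT / real J) * S \<le> gam abar p * (DT / real J) * (4^k * mn^(2*k) * (40 * real J * mn))"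
    using Sb g0 DT by (intro mult_left_mono) auto
  also have "\<dots> = 40 * 4^k * gam abar p * DT * mn^(2*k+1)"
  proof -
    have "real J \<noteq> 0" using J by simp
    then have h1: "(DT / real J) * real J = DT" by simp
    have h2: "mn^(2*k) * mn = mn^(2*k+1)" by (simp add: mult.commute)
    have "gam abar p * (DT / real J) * (4^k * mn^(2*k) * (40 * real J * mn))
        = 40 * 4^k * gam abar p * ((DT / real J) * real J) * (mn^(2*k) * mn)" by (simp only: mult_ac)
    then show ?thesis unfolding h1 h2 .
  qed
  also have "\<dots> \<le> 40 * 4^k * gam abar p * DT * x powr s"
  proof -
    have mp: "mn^(2*k+1) \<le> x powr s" using min_pow_le[OF x s1 s2] unfolding mn_def .
    have c0: "0 \<le> 40 * 4^k * gam abar p * DT" using g0 DT by simp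
    show ?thesis using mult_left_mono[OF mp c0] .
  qed
  also have "\<dots> = 40 * 4^k * DT powr (1+s) * lam p powr (1/2 - 2*abar + s)"
  proof -
    have e1: "x powr s = DT powr s * lam p powr s" unfolding x_def by (rule powr_mult)
    have e2: "DT powr (1+s) = DT powr 1 * DT powr s" by (rule powr_add)
    have e3: "DT powr 1 = DT" using DT by simp
    have e4: "lam p powr (1/2 - 2*abar + s) = lam p powr (1/2 - 2*abar) * lam p powr s" by (rule powr_add)
    show ?thesis unfolding gam_def e1 e2 e3 e4 by algebra
  qed
  finally show ?thesis unfolding S_def .
qed

lemma core:
  fixes abar s :: real and k :: nat
  assumes s1: "-(2*real k+1) \<le> s" and s2: "s \<le> 2*real k+1" and s3: "s < 2*abar - 1"
  shows "\<exists>C0\<ge>0. \<forall>(DT::real) (J::nat) (M::'a measure) \<beta> n. 0 < DT \<longrightarrow> 1 \<le> J \<longrightarrow> indep_BMs M \<beta> \<longrightarrow>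
            mean_sq_err M abar DT J \<beta> k n \<le> ennreal (C0 * DT powr (1+s))"
proof -
  define q where "q = 1/2 - 2*abar + s"
  define f where "f p' = lam (Suc p') powr q" for p'
  have f0: "0 \<le> f p'" for p' by (simp add: f_def)
  have sumf: "summable f"
  proof -
    have "summable (\<lambda>n. real n powr (2*q))" using s3 by (subst summable_real_powr_iff) (simp add: q_def)
    hence "summable (\<lambda>n. (\<lambda>m. real m powr (2*q)) (Suc n))" by (rule summable_Suc_iff[of "\<lambda>m. real m powr (2*q)", THEN iffD2])
    hence "summable (\<lambda>n. pi powr (2*q) * real (Suc n) powr (2*q))" by (intro summable_mult) simp
    moreover have "f = (\<lambda>n. pi powr (2*q) * real (Suc n) powr (2*q))"
      by (rule ext) (simp only: f_def lam_powr[OF zero_less_Suc])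
    ultimately show ?thesis by simp
  qed
  define C0 where "C0 = 40 * 4^k * suminf f"
  have C00: "0 \<le> C0" unfolding C0_def using suminf_nonneg[OF sumf f0] by simp
  show ?thesis
  proof (intro exI[of _ C0] conjI allI impI C00)
    fix DT :: real and J :: nat and M :: "'a measure" and \<beta> n
    assume DT: "0 < DT" and J: "1 \<le> J" and BM: "indep_BMs M \<beta>"
    have meas[measurable]: "\<beta> p t \<in> borel_measurable M" for p t using BM unfolding indep_BMs_def by blast
    define D where "D p = Dc (1/(1+DT*lam p)) (exp (-(DT*lam p))) (exp (-(DT*lam p)/real J)) J k n" for p
    have rep: "err abar DT J \<beta> k n \<omega> (Suc p') = Lin (sqrt (gam abar (Suc p'))) n J (wi DT J \<beta> (Suc p') \<omega>) (D (Suc p'))" for \<omega> p'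
      using err_repr[OF DT J zero_less_Suc, of abar \<beta> k n \<omega> p'] unfolding D_def .
    have mL: "(\<lambda>\<omega>. ennreal ((Lin (sqrt (gam abar (Suc p'))) n J (wi DT J \<beta> (Suc p') \<omega>) (D (Suc p')))^2)) \<in> borel_measurable M" for p'
      unfolding Lin_def wi_def by measurable
    have "mean_sq_err M abar DT J \<beta> k n = (\<integral>\<^sup>+\<omega>. (\<Sum>p'. ennreal ((Lin (sqrt (gam abar (Suc p'))) n J (wi DT J \<beta> (Suc p') \<omega>) (D (Suc p')))^2)) \<partial>M)"
      unfolding mean_sq_err_def Hnorm2_def rep ..
    also have "\<dots> = (\<Sum>p'. \<integral>\<^sup>+\<omega>. ennreal ((Lin (sqrt (gam abar (Suc p'))) n J (wi DT J \<beta> (Suc p') \<omega>) (D (Suc p')))^2) \<partial>M)"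
      by (rule nn_integral_suminf) (rule mL)
    also have "\<dots> = (\<Sum>p'. ennreal ((sqrt (gam abar (Suc p')))^2 * (DT/real J) * (\<Sum>a<n. \<Sum>b<J. (D (Suc p') a b)^2)))"
      using mode_mse[OF BM DT J] by simp
    also have "\<dots> \<le> (\<Sum>p'. ennreal (40 * 4^k * DT powr (1+s) * f p'))"
    proof (intro suminf_le summableI ennreal_leI)
      fix p'
      have g0: "0 \<le> gam abar (Suc p')" unfolding gam_def by simp
      show "(sqrt (gam abar (Suc p')))^2 * (DT/real J) * (\<Sum>a<n. \<Sum>b<J. (D (Suc p') a b)^2) \<le> 40 * 4^k * DT powr (1+s) * f p'"
        using mode_bound[OF DT J zero_less_Suc s1 s2, of abar p' n] g0 unfolding D_def f_def q_def by simp
    qed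
    also have "\<dots> = ennreal (\<Sum>p'. 40 * 4^k * DT powr (1+s) * f p')"
      by (rule suminf_ennreal2) (use f0 sumf in \<open>auto intro: summable_mult\<close>)
    also have "(\<Sum>p'. 40 * 4^k * DT powr (1+s) * f p') = C0 * DT powr (1+s)"
      unfolding C0_def using suminf_mult[OF sumf, of "40 * 4^k * DT powr (1+s)"] by (simp add: mult_ac)
    finally show "mean_sq_err M abar DT J \<beta> k n \<le> ennreal (C0 * DT powr (1+s))" .
  qed
qed

theorem theorem4p1:
  fixes T abar :: real and k :: nat
  assumes "0 < T" and "0 < abar"
  shows
   "(real k + 1 < abar \<longrightarrow>
      (\<exists>C>0. \<forall>(N::nat) (J::nat) (M::'a measure) \<beta>. 1 \<le> N \<longrightarrow> 1 \<le> J \<longrightarrow> indep_BMs M \<beta> \<longrightarrow>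
         (\<forall>n. real n * (T / real N) \<le> T \<longrightarrow>
            mean_sq_err M abar (T / real N) J \<beta> k n \<le> ennreal ((C * (T / real N) ^ (k + 1))\<^sup>2))))
    \<and> (abar \<le> real k + 1 \<longrightarrow>
      (\<forall>\<alpha>. 0 < \<alpha> \<and> \<alpha> < abar \<longrightarrow>
        (\<exists>C>0. \<forall>(N::nat) (J::nat) (M::'a measure) \<beta>. 1 \<le> N \<longrightarrow> 1 \<le> J \<longrightarrow> indep_BMs M \<beta> \<longrightarrow>
           (\<forall>n. real n * (T / real N) \<le> T \<longrightarrow>
              mean_sq_err M abar (T / real N) J \<beta> k n \<le> ennreal ((C * (T / real N) powr \<alpha>)\<^sup>2)))))"
proof (intro conjI impI allI)
  assume k1: "real k + 1 < abar"
  obtain C0 where C0: "0 \<le> C0" and H: "\<forall>(DT::real) (J::nat) (M::'a measure) \<beta> n. 0 < DT \<longrightarrow> 1 \<le> J \<longrightarrow> indep_BMs M \<beta> \<longrightarrow>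
            mean_sq_err M abar DT J \<beta> k n \<le> ennreal (C0 * DT powr (1 + (2*real k+1)))"
    using core[of k "2*real k+1" abar] k1 by auto
  define C where "C = sqrt C0 + 1"
  have Cpos: "0 < C" using C0 by (simp add: C_def add_nonneg_pos)
  have CC: "C0 \<le> C^2"
  proof -
    have "C0 = (sqrt C0)^2" using C0 by simp
    also have "\<dots> \<le> C^2" unfolding C_def using C0 by (intro power_mono) auto
    finally show ?thesis .
  qed
  show "\<exists>C>0. \<forall>(N::nat) (J::nat) (M::'a measure) \<beta>. 1 \<le> N \<longrightarrow> 1 \<le> J \<longrightarrow> indep_BMs M \<beta> \<longrightarrow>
         (\<forall>n. real n * (T / real N) \<le> T \<longrightarrow>
            mean_sq_err M abar (T / real N) J \<beta> k n \<le> ennreal ((C * (T / real N) ^ (k + 1))\<^sup>2))"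
  proof (intro exI[of _ C] conjI Cpos allI impI)
    fix N J :: nat and M :: "'a measure" and \<beta> n
    assume N: "1 \<le> N" and J: "1 \<le> J" and BM: "indep_BMs M \<beta>"
    define DT where "DT = T / real N"
    have DT: "0 < DT" using N assms by (simp add: DT_def)
    have "mean_sq_err M abar DT J \<beta> k n \<le> ennreal (C0 * DT powr (1 + (2*real k+1)))" using H DT J BM by blast
    also have "DT powr (1 + (2*real k+1)) = (DT^(k+1))^2"
    proof -
      have "1 + (2*real k+1) = real (2*(k+1))" by simp
      then have "DT powr (1 + (2*real k+1)) = DT^(2*(k+1))" using DT by (simp only: powr_realpow)
      then show ?thesis by (simp only: pow_sq_swap power_mult)
    qed
    also have "ennreal (C0 * (DT^(k+1))^2) \<le> ennreal ((C * DT^(k+1))^2)"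
      using CC by (intro ennreal_leI) (simp add: power_mult_distrib mult_right_mono)
    finally show "mean_sq_err M abar (T / real N) J \<beta> k n \<le> ennreal ((C * (T / real N) ^ (k + 1))\<^sup>2)"
      unfolding DT_def .
  qed
next
  fix \<alpha> :: real
  assume k1: "abar \<le> real k + 1" and a: "0 < \<alpha> \<and> \<alpha> < abar"
  obtain C0 where C0: "0 \<le> C0" and H: "\<forall>(DT::real) (J::nat) (M::'a measure) \<beta> n. 0 < DT \<longrightarrow> 1 \<le> J \<longrightarrow> indep_BMs M \<beta> \<longrightarrow>
            mean_sq_err M abar DT J \<beta> k n \<le> ennreal (C0 * DT powr (1 + (2*\<alpha>-1)))"
    using core[of k "2*\<alpha>-1" abar] k1 a by auto
  define C where "C = sqrt C0 + 1"
  have Cpos: "0 < C" using C0 by (simp add: C_def add_nonneg_pos)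
  have CC: "C0 \<le> C^2"
  proof -
    have "C0 = (sqrt C0)^2" using C0 by simp
    also have "\<dots> \<le> C^2" unfolding C_def using C0 by (intro power_mono) auto
    finally show ?thesis .
  qed
  show "\<exists>C>0. \<forall>(N::nat) (J::nat) (M::'a measure) \<beta>. 1 \<le> N \<longrightarrow> 1 \<le> J \<longrightarrow> indep_BMs M \<beta> \<longrightarrow>
           (\<forall>n. real n * (T / real N) \<le> T \<longrightarrow>
              mean_sq_err M abar (T / real N) J \<beta> k n \<le> ennreal ((C * (T / real N) powr \<alpha>)\<^sup>2))"
  proof (intro exI[of _ C] conjI Cpos allI impI)
    fix N J :: nat and M :: "'a measure" and \<beta> n
    assume N: "1 \<le> N" and J: "1 \<le> J" and BM: "indep_BMs M \<beta>"
    define DT where "DT = T / real N"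
    have DT: "0 < DT" using N assms by (simp add: DT_def)
    have "mean_sq_err M abar DT J \<beta> k n \<le> ennreal (C0 * DT powr (1 + (2*\<alpha>-1)))" using H DT J BM by blast
    also have "DT powr (1 + (2*\<alpha>-1)) = (DT powr \<alpha>)^2"
    proof -
      have "DT powr (1 + (2*\<alpha>-1)) = DT powr (\<alpha> + \<alpha>)" by simp
      also have "\<dots> = DT powr \<alpha> * DT powr \<alpha>" by (rule powr_add)
      finally show ?thesis by (simp add: power2_eq_square)
    qed
    also have "ennreal (C0 * (DT powr \<alpha>)^2) \<le> ennreal ((C * DT powr \<alpha>)^2)"
      using CC by (intro ennreal_leI) (simp add: power_mult_distrib mult_right_mono)
    finally show "mean_sq_err M abar (T / real N) J \<beta> k n \<le> ennreal ((C * (T / real N) powr \<alpha>)\<^sup>2)"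
      unfolding DT_def .
  qed
qed

end
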